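(* Let $A\subseteq\mathbb{R}$ be nonempty and $a\in A$. For each $k\in\mathbb{N}$ let $f_k:A\to\mathbb{R}$ be weakly symmetrically continuous at $a$, and suppose $(f_k)$ converges uniformly on $A$ to a function $f:A\to\mathbb{R}$. Then $f$ is weakly symmetrically continuous at $a$.
   Context: $S_a(A)$ is the set of all sequences $(h_n)$ of positive reals converging to $0$ with $a+h_n,a-h_n\in A$ for every $n$; a function $f:A\to\mathbb{R}$ is weakly symmetrically continuous at $a$ if, whenever $S_a(A)\neq\emptyset$, there exists $(h_n)\in S_a(A)$ with $\lim_{n\to\infty}\big(f(a+h_n)-f(a-h_n)\big)=0$. *)

theory Defs
  imports "HOL-Analysis.Analysis"
begin

definition sym_seqs :: "real set \<Rightarrow> real \<Rightarrow> (nat \<Rightarrow> real) set" where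
  "sym_seqs A a = {h. (\<forall>n. h n > 0) \<and> h \<longlonglongrightarrow> 0 \<and> (\<forall>n. a + h n \<in> A \<and> a - h n \<in> A)}"

definition weakly_sym_cont :: "real set \<Rightarrow> (real \<Rightarrow> real) \<Rightarrow> real \<Rightarrow> bool" where
  "weakly_sym_cont A f a \<longleftrightarrow>
     (sym_seqs A a \<noteq> {} \<longrightarrow>
        (\<exists>h\<in>sym_seqs A a. (\<lambda>n. f (a + h n) - f (a - h n)) \<longlonglongrightarrow> 0))"

end

theory Submission
  imports Defs
begin

theorem theorem4p2:
  fixes A :: "real set" and a :: real
    and fs :: "nat \<Rightarrow> real \<Rightarrow> real" and f :: "real \<Rightarrow> real"
  assumes "A \<noteq> {}" and "a \<in> A"
    and "\<And>k. weakly_sym_cont A (fs k) a"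
    and "uniform_limit A fs f sequentially"
  shows "weakly_sym_cont A f a"
  unfolding weakly_sym_cont_def
proof
  assume ne: "sym_seqs A a \<noteq> {}"
  have key: "\<exists>t. t > 0 \<and> t < e \<and> a + t \<in> A \<and> a - t \<in> A \<and> \<bar>f (a+t) - f (a-t)\<bar> < 3*e"
    if e: "e > 0" for e
  proof -
    from assms(4) e have "\<forall>\<^sub>F n in sequentially. \<forall>x\<in>A. dist (fs n x) (f x) < e"
      by (simp add: uniform_limit_iff)
    then obtain N where N: "\<And>x. x \<in> A \<Longrightarrow> dist (fs N x) (f x) < e"
      by (auto simp: eventually_sequentially)
    from assms(3)[of N] ne obtain h where h: "h \<in> sym_seqs A a"
      and hl: "(\<lambda>n. fs N (a + h n) - fs N (a - h n)) \<longlonglongrightarrow> 0"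
      unfolding weakly_sym_cont_def by blast
    from h have hpos: "\<And>n. h n > 0" and h0: "h \<longlonglongrightarrow> 0"
      and hA: "\<And>n. a + h n \<in> A \<and> a - h n \<in> A" unfolding sym_seqs_def by auto
    have "\<forall>\<^sub>F n in sequentially. dist (h n) 0 < e" using h0 e by (rule tendstoD)
    moreover have "\<forall>\<^sub>F n in sequentially. dist (fs N (a + h n) - fs N (a - h n)) 0 < e"
      using hl e by (rule tendstoD)
    ultimately have "\<forall>\<^sub>F n in sequentially. dist (h n) 0 < e \<and> dist (fs N (a + h n) - fs N (a - h n)) 0 < e"
      by (rule eventually_conj)
    then obtain m where m1: "dist (h m) 0 < e" and m2: "dist (fs N (a + h m) - fs N (a - h m)) 0 < e"
      by (auto simp: eventually_sequentially)
    have d1: "\<bar>fs N (a + h m) - f (a + h m)\<bar> < e" using N[of "a + h m"] hA[of m] by (simp add: dist_real_def)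
    have d2: "\<bar>fs N (a - h m) - f (a - h m)\<bar> < e" using N[of "a - h m"] hA[of m] by (simp add: dist_real_def)
    show ?thesis
      apply (rule exI[of _ "h m"])
      using hpos[of m] m1 m2 d1 d2 hA[of m] by (auto simp: dist_real_def abs_if split: if_splits)
  qed
  have "\<forall>k. \<exists>t. t > 0 \<and> t < inverse (real (Suc k)) \<and> a + t \<in> A \<and> a - t \<in> A \<and>
     \<bar>f (a+t) - f (a-t)\<bar> < 3*inverse (real (Suc k))"
    using key by simp
  then obtain g where g: "\<And>k. g k > 0 \<and> g k < inverse (real (Suc k)) \<and> a + g k \<in> A \<and> a - g k \<in> A \<and>
     \<bar>f (a+g k) - f (a-g k)\<bar> < 3*inverse (real (Suc k))"
    by metis
  have lim: "(\<lambda>k. inverse (real (Suc k))) \<longlonglongrightarrow> 0"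
    using LIMSEQ_inverse_real_of_nat by simp
  have lim3: "(\<lambda>k. 3 * inverse (real (Suc k))) \<longlonglongrightarrow> 0"
    using tendsto_mult_right_zero[OF lim, of 3] by simp
  have "g \<longlonglongrightarrow> 0"
  proof (rule Lim_null_comparison[OF _ lim], rule always_eventually, rule allI)
    fix k show "norm (g k) \<le> inverse (real (Suc k))" using g[of k] by simp
  qed
  hence gS: "g \<in> sym_seqs A a" using g unfolding sym_seqs_def by auto
  have "(\<lambda>n. f (a + g n) - f (a - g n)) \<longlonglongrightarrow> 0"
    by (rule Lim_null_comparison[OF _ lim3]) (use g in \<open>auto intro!: always_eventually less_imp_le\<close>)
  with gS show "\<exists>h\<in>sym_seqs A a. (\<lambda>n. f (a + h n) - f (a - h n)) \<longlonglongrightarrow> 0" by blast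
qed

end
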